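(* Let $N$ be a positive even integer, $\alpha>0$, and let $\Phi:[0,1]^2\times(\mathbb{R}^2\setminus\{0\})\to\mathbb{R}$ be homogeneous of degree one in $\xi$. Let $\hat\xi_\ell$ be a unit vector, let $W_\ell$ be the set of $\xi$ in the square $[-\frac N2,\frac N2-1]^2$ whose angle with $\hat\xi_\ell$ is at most $\frac{\alpha}{\sqrt N}$, and let $\Phi_\ell(x,\xi)=\Phi(x,\xi)-\nabla_\xi\Phi(x,\hat\xi_\ell)\cdot\xi$. Assume $\Phi_\ell(x,\xi)$ is measurable in $x$ and $(Q,R)$-analytic in $\xi$ for some constants $Q,R>0$, and that $\alpha$ is admissible in the sense that $$\alpha<\min\Big\{\frac{R\sqrt N}{2},\ \frac{R}{\sqrt{\sqrt2\,Q}}\Big\}.$$ Then for every $p>\frac{2}{\log_2\left(\frac{R\sqrt N}{\alpha}\right)}$ there is a constant $C_p>0$, not depending on $\epsilon$, such that for all $0<\epsilon\le1$ the $\epsilon$-separation rank of $e^{2\pi i\Phi_\ell(x,\xi)}$ for $x\in[0,1]^2$, $\xi\in W_\ell$ obeys $r_\epsilon\le C_p\,\epsilon^{-p}$.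
   Context: A function $F(x,\xi)$ is called $(Q,R)$-analytic in $\xi$ if for each $x$ it is real-analytic in $\xi\neq0$ and, with $\theta=\arg\xi$, $2\pi\sup_{|\xi|=1}|\partial_\theta^kF(x,\xi)|\le Q\,k!\,R^{-k}$ for all integers $k\ge0$. For a function $f(x,\xi)$ on a product domain $D_1\times D_2$ and $\epsilon>0$, the $\epsilon$-separation rank is the smallest integer $r_\epsilon$ for which there exist functions $c_n$ on $D_1$, $d_n$ on $D_2$ ($0\le n\le r_\epsilon-1$) with $|f(x,\xi)-\sum_{n=0}^{r_\epsilon-1}c_n(x)d_n(\xi)|\le\epsilon$ for all $(x,\xi)\in D_1\times D_2$. *)

theory Defs
  imports "HOL-Analysis.Analysis"
begin

definition real_analytic_on2 :: "(real \<times> real \<Rightarrow> real) \<Rightarrow> (real \<times> real) set \<Rightarrow> bool" where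
  "real_analytic_on2 F U \<longleftrightarrow>
     (\<forall>a\<in>U. \<exists>c :: nat \<Rightarrow> nat \<Rightarrow> real. \<exists>r>0. \<forall>z\<in>ball a r.
        ((\<lambda>(i, j). c i j * (fst z - fst a) ^ i * (snd z - snd a) ^ j) has_sum F z) UNIV)"

text \<open>With theta = arg xi,
  the theta-derivatives on the unit circle are derivatives of
  theta -> F x (cos theta, sin theta); "2 pi sup |...| <= bound" is written pointwise.\<close>
definition QR_analytic ::
  "('a \<Rightarrow> real \<times> real \<Rightarrow> real) \<Rightarrow> 'a set \<Rightarrow> real \<Rightarrow> real \<Rightarrow> bool" where
  "QR_analytic F D Q R \<longleftrightarrow>
     (\<forall>x\<in>D. real_analytic_on2 (F x) (- {0}) \<and>
        (\<forall>k::nat. \<forall>\<theta>::real.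
           2 * pi * \<bar>(deriv ^^ k) (\<lambda>t. F x (cos t, sin t)) \<theta>\<bar> \<le> Q * fact k / R ^ k))"

definition sep_rank ::
  "('a \<Rightarrow> 'b \<Rightarrow> complex) \<Rightarrow> 'a set \<Rightarrow> 'b set \<Rightarrow> real \<Rightarrow> nat" where
  "sep_rank f D1 D2 \<epsilon> =
     (LEAST r. \<exists>c :: nat \<Rightarrow> 'a \<Rightarrow> complex. \<exists>d :: nat \<Rightarrow> 'b \<Rightarrow> complex.
        \<forall>x\<in>D1. \<forall>\<xi>\<in>D2. cmod (f x \<xi> - (\<Sum>n<r. c n x * d n \<xi>)) \<le> \<epsilon>)"

definition vec_angle :: "real \<times> real \<Rightarrow> real \<times> real \<Rightarrow> real" where
  "vec_angle u v = arccos ((u \<bullet> v) / (norm u * norm v))"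

definition wedge :: "nat \<Rightarrow> real \<Rightarrow> real \<times> real \<Rightarrow> (real \<times> real) set" where
  "wedge N \<alpha> \<xi>h =
     {\<xi>. \<xi> \<in> {- real N / 2 .. real N / 2 - 1} \<times> {- real N / 2 .. real N / 2 - 1}
        \<and> \<xi> \<noteq> 0 \<and> vec_angle \<xi> \<xi>h \<le> \<alpha> / sqrt (real N)}"

end

theory Submission
  imports Defs "HOL-Complex_Analysis.Complex_Analysis"
begin


lemma holo_real_derivs:
  fixes G :: "complex \<Rightarrow> complex" and h :: "real \<Rightarrow> real"
  assumes holo: "G holomorphic_on S" and S: "open S"
    and agree: "\<And>t. complex_of_real t \<in> S \<Longrightarrow> G (of_real t) = of_real (h t)"
  shows "\<forall>t. complex_of_real t \<in> S \<longrightarrow> (deriv ^^ k) G (of_real t) = of_real ((deriv ^^ k) h t)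
     \<and> ((deriv ^^ k) h has_real_derivative (deriv ^^ Suc k) h t) (at t)"
proof -
  have key: "\<And>k. (\<forall>t. complex_of_real t \<in> S \<longrightarrow> (deriv ^^ k) G (of_real t) = of_real ((deriv ^^ k) h t)) \<Longrightarrow>
     (\<forall>t. complex_of_real t \<in> S \<longrightarrow> (deriv ^^ Suc k) G (of_real t) = of_real ((deriv ^^ Suc k) h t)
     \<and> ((deriv ^^ k) h has_real_derivative (deriv ^^ Suc k) h t) (at t))"
  proof (intro allI impI)
    fix k t assume IH: "\<forall>t. complex_of_real t \<in> S \<longrightarrow> (deriv ^^ k) G (of_real t) = of_real ((deriv ^^ k) h t)"
      and tS: "complex_of_real t \<in> S"
    define Gk where "Gk = (deriv ^^ k) G"
    define hk where "hk = (deriv ^^ k) h"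
    have hGk: "Gk holomorphic_on S" unfolding Gk_def by (rule holomorphic_higher_deriv[OF holo S])
    define D where "D = deriv Gk (of_real t)"
    have dG: "(Gk has_field_derivative D) (at (of_real t))"
      unfolding D_def using hGk S tS holomorphic_derivI by blast
    have d1: "((\<lambda>s. Gk (of_real s)) has_vector_derivative D) (at t)"
    proof -
      have "(complex_of_real has_vector_derivative 1) (at t)"
        unfolding has_vector_derivative_def
        using has_derivative_of_real[OF has_derivative_ident, of "at t"] by (simp add: scaleR_conv_of_real)
      from field_vector_diff_chain_at[OF this, of Gk D] dG show ?thesis by (simp add: o_def)
    qed
    define T where "T = {s::real. complex_of_real s \<in> S}"
    have TT: "T = complex_of_real -` S" by (auto simp: T_def)
    have "open (complex_of_real -` S)"
      by (rule continuous_open_vimage[OF S]) (simp add: continuous_at_imp_continuous_within isCont_of_real)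
    then have T: "open T" "t \<in> T" using tS TT by (auto simp: T_def)
    have d2: "((\<lambda>s. complex_of_real (hk s)) has_vector_derivative D) (at t)"
      by (rule has_vector_derivative_transform_within_open[OF d1 T]) (use IH in \<open>auto simp: T_def Gk_def hk_def\<close>)
    have dRe: "(hk has_real_derivative Re D) (at t)"
    proof -
      have "((\<lambda>s. Re (complex_of_real (hk s))) has_vector_derivative Re D) (at t)"
        using bounded_linear.has_vector_derivative[OF bounded_linear_Re d2] by (simp add: o_def)
      then show ?thesis by (simp add: has_real_derivative_iff_has_vector_derivative)
    qed
    have dIm: "Im D = 0"
    proof -
      have "((\<lambda>s. Im (complex_of_real (hk s))) has_vector_derivative Im D) (at t)"
        using bounded_linear.has_vector_derivative[OF bounded_linear_Im d2] by (simp add: o_def)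
      then have "((\<lambda>s. 0::real) has_real_derivative Im D) (at t)"
        by (simp add: has_real_derivative_iff_has_vector_derivative)
      moreover have "((\<lambda>s. 0::real) has_real_derivative 0) (at t)" by simp
      ultimately show ?thesis using DERIV_unique by blast
    qed
    have "deriv hk t = Re D" using dRe DERIV_imp_deriv by blast
    then have "(deriv ^^ Suc k) h t = Re D" by (simp add: hk_def)
    moreover have "(deriv ^^ Suc k) G (of_real t) = D" by (simp add: D_def Gk_def)
    ultimately show "(deriv ^^ Suc k) G (of_real t) = of_real ((deriv ^^ Suc k) h t)
      \<and> ((deriv ^^ k) h has_real_derivative (deriv ^^ Suc k) h t) (at t)"
      using dIm dRe by (simp add: hk_def complex_eq_iff)
  qed
  show ?thesis
  proof (induction k)
  case 0
  have "\<forall>t. complex_of_real t \<in> S \<longrightarrow> (deriv ^^ 0) G (of_real t) = of_real ((deriv ^^ 0) h t)"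
    using agree by simp
  then show ?case using key[of 0] agree by auto
next
  case (Suc k)
  then have "\<forall>t. complex_of_real t \<in> S \<longrightarrow> (deriv ^^ k) G (of_real t) = of_real ((deriv ^^ k) h t)"
    by blast
  then have "\<forall>t. complex_of_real t \<in> S \<longrightarrow> (deriv ^^ Suc k) G (of_real t) = of_real ((deriv ^^ Suc k) h t)"
    using key[of k] by blast
  then show ?case using key[of "Suc k"] by blast
qed
qed
lemma circle_smooth:
  fixes F :: "real \<times> real \<Rightarrow> real"
  assumes an: "real_analytic_on2 F (- {0})"
  shows "((deriv ^^ k) (\<lambda>t. F (cos t, sin t)) has_real_derivative
           (deriv ^^ Suc k) (\<lambda>t. F (cos t, sin t)) t) (at t)"
proof -
  define a where "a = (cos t, sin t)"
  have a0: "a \<in> - {0}" by (auto simp: a_def prod_eq_iff) (metis sin_cos_squared_add zero_neq_one power2_eq_square mult_zero_left add_0)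
  obtain c :: "nat \<Rightarrow> nat \<Rightarrow> real" and r where r: "r > 0" and
    hs: "\<And>z. z \<in> ball a r \<Longrightarrow>
        ((\<lambda>(i, j). c i j * (fst z - fst a) ^ i * (snd z - snd a) ^ j) has_sum F z) UNIV"
    using an a0 unfolding real_analytic_on2_def by blast
  define \<rho> where "\<rho> = r / 2"
  have \<rho>: "\<rho> > 0" using r by (simp add: \<rho>_def)
  have sq2: "sqrt 2 < (2::real)" by (rule sqrt2_less_2)
  have inball: "z \<in> ball a r" if "\<bar>fst z - fst a\<bar> \<le> \<rho>" "\<bar>snd z - snd a\<bar> \<le> \<rho>" for z
  proof -
    have "dist a z = sqrt ((fst z - fst a)^2 + (snd z - snd a)^2)"
      by (cases a, cases z) (simp add: dist_Pair_Pair dist_real_def power2_commute)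
    also have "\<dots> \<le> sqrt (\<rho>^2 + \<rho>^2)"
      using that \<rho> by (intro real_sqrt_le_mono add_mono) (auto simp: abs_le_square_iff[symmetric])
    also have "\<dots> = sqrt 2 * \<rho>" using \<rho> by (simp add: real_sqrt_mult)
    also have "\<dots> < 2 * \<rho>" using \<rho> sq2 by simp
    finally show ?thesis by (simp add: \<rho>_def)
  qed
  define e :: "nat \<Rightarrow> nat \<times> nat" where "e = prod_decode"
  have be: "bij_betw e UNIV UNIV" using bij_prod_decode by (simp add: e_def)
  define mM where "mM n = \<bar>c (fst (e n)) (snd (e n))\<bar> * \<rho> ^ fst (e n) * \<rho> ^ snd (e n)" for n
  have summM: "summable mM"
  proof -
    have "((\<lambda>(i, j). c i j * (fst (fst a + \<rho>, snd a + \<rho>) - fst a) ^ i * (snd (fst a + \<rho>, snd a + \<rho>) - snd a) ^ j)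
          has_sum F (fst a + \<rho>, snd a + \<rho>)) UNIV"
      using \<rho> by (intro hs inball) auto
    then have "(\<lambda>(i, j). c i j * \<rho> ^ i * \<rho> ^ j) summable_on UNIV"
      by (auto simp: summable_on_def)
    then have "(\<lambda>p. norm ((\<lambda>(i, j). c i j * \<rho> ^ i * \<rho> ^ j) p)) summable_on UNIV"
      using summable_on_iff_abs_summable_on_real by blast
    then have "(\<lambda>n. norm ((\<lambda>(i, j). c i j * \<rho> ^ i * \<rho> ^ j) (e n))) summable_on UNIV"
      using summable_on_reindex_bij_betw[OF be, of "\<lambda>p. norm ((\<lambda>(i, j). c i j * \<rho> ^ i * \<rho> ^ j) p)"] by simp
    moreover have "(\<lambda>n. norm ((\<lambda>(i, j). c i j * \<rho> ^ i * \<rho> ^ j) (e n))) = mM"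
      using \<rho> by (auto simp: mM_def split_beta abs_mult)
    ultimately show ?thesis using summable_on_imp_summable by metis
  qed
  have cc: "isCont (cos::complex\<Rightarrow>complex) (of_real t)" by (rule isCont_cos)
  have cs: "isCont (sin::complex\<Rightarrow>complex) (of_real t)" by (rule isCont_sin)
  obtain d1 where d1: "d1 > 0" "\<And>w. dist w (complex_of_real t) < d1 \<Longrightarrow> dist (cos w) (cos (complex_of_real t)) < \<rho>"
    using cc \<rho> unfolding continuous_at_eps_delta by blast
  obtain d2 where d2: "d2 > 0" "\<And>w. dist w (complex_of_real t) < d2 \<Longrightarrow> dist (sin w) (sin (complex_of_real t)) < \<rho>"
    using cs \<rho> unfolding continuous_at_eps_delta by blast
  define s where "s = min d1 d2 / 2"
  have s: "s > 0" using d1 d2 by (simp add: s_def)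
  define u where "u w = cos w - complex_of_real (fst a)" for w
  define v where "v w = sin w - complex_of_real (snd a)" for w
  have uv: "cmod (u w) \<le> \<rho> \<and> cmod (v w) \<le> \<rho>" if "w \<in> cball (complex_of_real t) s" for w
  proof -
    have "dist w (complex_of_real t) < d1" "dist w (complex_of_real t) < d2"
      using that d1 d2 by (auto simp: s_def dist_commute)
    then have "dist (cos w) (cos (complex_of_real t)) < \<rho>" "dist (sin w) (sin (complex_of_real t)) < \<rho>"
      using d1 d2 by auto
    then show ?thesis by (simp add: u_def v_def a_def dist_norm cos_of_real sin_of_real)
  qed
  define T where "T n w = complex_of_real (c (fst (e n)) (snd (e n))) * u w ^ fst (e n) * v w ^ snd (e n)" for n w
  have Tb: "norm (T n w) \<le> mM n" if "w \<in> cball (complex_of_real t) s" for n w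
    using uv[OF that] unfolding T_def mM_def norm_mult norm_power norm_of_real
    using \<rho> by (intro mult_mono power_mono) auto
  have ul: "uniform_limit (cball (complex_of_real t) s) (\<lambda>n w. \<Sum>i<n. T i w) (\<lambda>w. \<Sum>i. T i w) sequentially"
    by (rule Weierstrass_m_test[OF Tb summM])
  have ev: "\<forall>\<^sub>F n in sequentially. continuous_on (cball (complex_of_real t) s) (\<lambda>w. \<Sum>i<n. T i w)
      \<and> (\<lambda>w. \<Sum>i<n. T i w) holomorphic_on ball (complex_of_real t) s"
    by (intro always_eventually allI conjI) (auto simp: T_def u_def v_def intro!: continuous_intros holomorphic_intros)
  obtain G0 where G0: "G0 = (\<lambda>w. \<Sum>i. T i w)" by blast
  have holo: "(\<lambda>w. \<Sum>i. T i w) holomorphic_on ball (complex_of_real t) s"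
    by (rule holomorphic_uniform_limit[OF ev ul]) auto
  have agree: "(\<lambda>w. \<Sum>i. T i w) (complex_of_real \<tau>) = complex_of_real ((\<lambda>t. F (cos t, sin t)) \<tau>)"
    if "complex_of_real \<tau> \<in> ball (complex_of_real t) s" for \<tau>
  proof -
    define z where "z = (cos \<tau>, sin \<tau>)"
    have uvt: "u (complex_of_real \<tau>) = of_real (fst z - fst a)" "v (complex_of_real \<tau>) = of_real (snd z - snd a)"
      by (simp_all add: u_def v_def z_def cos_of_real sin_of_real)
    have "z \<in> ball a r"
      using uv[of "complex_of_real \<tau>"] that uvt by (intro inball) (auto simp del: of_real_diff)
    from hs[OF this]
    have "((\<lambda>n. (\<lambda>(i, j). c i j * (fst z - fst a) ^ i * (snd z - snd a) ^ j) (e n)) has_sum F z) UNIV"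
      using has_sum_reindex_bij_betw[OF be, of "\<lambda>(i, j). c i j * (fst z - fst a) ^ i * (snd z - snd a) ^ j"] by simp
    then have sm: "(\<lambda>n. (\<lambda>(i, j). c i j * (fst z - fst a) ^ i * (snd z - snd a) ^ j) (e n)) sums F z"
      by (rule has_sum_imp_sums)
    have "(\<Sum>i. T i (complex_of_real \<tau>)) = (\<Sum>i. complex_of_real ((\<lambda>(i, j). c i j * (fst z - fst a) ^ i * (snd z - snd a) ^ j) (e i)))"
      by (simp add: T_def uvt split_beta)
    also have "\<dots> = complex_of_real (F z)"
      using suminf_of_real[OF sums_summable[OF sm], where 'a=complex] sums_unique[OF sm] by simp
    finally show ?thesis by (simp add: z_def)
  qed
  have "complex_of_real t \<in> ball (complex_of_real t) s" using s by simp
  then show ?thesis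
    using holo_real_derivs[OF holo open_ball agree, of k] by blast
qed


lemma pow_fact_le_exp:
  fixes x :: real assumes "0 \<le> x" shows "x ^ n / fact n \<le> exp x"
proof -
  have s: "(\<lambda>n. x ^ n / fact n) sums exp x"
    using exp_converges[of x] by (simp add: field_simps)
  have "sum (\<lambda>n. x ^ n / fact n) {n} \<le> suminf (\<lambda>n. x ^ n / fact n)"
    by (rule sum_le_suminf[OF sums_summable[OF s]]) (use assms in auto)
  then show ?thesis using sums_unique[OF s] by simp
qed

lemma cis_diff_le: "cmod (cis a - cis b) \<le> \<bar>a - b\<bar>"
proof -
  have "cis a - cis b = cis b * (exp (\<i> * complex_of_real (a - b)) - 1)"
    by (simp add: cis_conv_exp algebra_simps exp_diff[symmetric] flip: exp_add)
  then have "cmod (cis a - cis b) = 2 * \<bar>sin ((a - b) / 2)\<bar>"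
    using dist_exp_i_1[of "a - b"] by (simp add: norm_mult)
  also have "\<dots> \<le> 2 * \<bar>(a - b) / 2\<bar>" using abs_sin_x_le_abs_x[of "(a - b) / 2"] by linarith
  finally show ?thesis by simp
qed

lemma sum_div_mod:
  fixes f :: "nat \<Rightarrow> nat \<Rightarrow> 'a::comm_monoid_add"
  assumes "D > 0"
  shows "(\<Sum>n<M * D. f (n div D) (n mod D)) = (\<Sum>j<M. \<Sum>l<D. f j l)"
proof -
  have "(\<Sum>n<M * D. f (n div D) (n mod D)) = (\<Sum>(j, l)\<in>{..<M} \<times> {..<D}. f j l)"
  proof (rule sum.reindex_bij_witness[where i = "\<lambda>(j, l). j * D + l" and j = "\<lambda>n. (n div D, n mod D)"])
    fix n assume "n \<in> {..<M * D}"
    then show "(n div D, n mod D) \<in> {..<M} \<times> {..<D}" using assms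
      by (auto simp: less_mult_imp_div_less)
  next
    fix jl assume "jl \<in> {..<M} \<times> {..<D}"
    then obtain j l where jl: "jl = (j, l)" "j < M" "l < D" by auto
    have "j * D + l < (j + 1) * D" using jl by simp
    also have "\<dots> \<le> M * D" using jl by (intro mult_right_mono) auto
    finally show "(case jl of (j, l) \<Rightarrow> j * D + l) \<in> {..<M * D}" using jl by simp
  qed (use assms in auto)
  also have "\<dots> = (\<Sum>j<M. \<Sum>l<D. f j l)" by (rule sum.cartesian_product[symmetric])
  finally show ?thesis .
qed

lemma taylor_approx:
  fixes h :: "real \<Rightarrow> real"
  assumes smooth: "\<And>k t. ((deriv ^^ k) h has_real_derivative (deriv ^^ Suc k) h t) (at t)"
    and bnd: "\<And>k t. 2 * pi * \<bar>(deriv ^^ k) h t\<bar> \<le> Q * fact k / R ^ k"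
    and R: "R > 0" and xc: "\<bar>x - c\<bar> \<le> R / 2" and K: "K > 0"
  shows "\<bar>h x - (\<Sum>m<K. (deriv ^^ m) h c / fact m * (x - c) ^ m)\<bar> \<le> Q / (2 * pi) / 2 ^ K"
proof -
  have "2 * pi * \<bar>h 0\<bar> \<le> Q" using bnd[of 0 0] by simp
  moreover have "0 \<le> 2 * pi * \<bar>h 0\<bar>" by simp
  ultimately have Q: "Q \<ge> 0" by linarith
  show ?thesis
proof (cases "x = c")
  case True
  have "(\<Sum>m<K. (deriv ^^ m) h c / fact m * (x - c) ^ m) = (\<Sum>m<K. if m = 0 then h c else 0)"
    using True by (intro sum.cong) auto
  also have "\<dots> = h c" using K by (simp add: sum.delta)
  finally show ?thesis using True Q by simp
next
  case False
  have prem: "\<forall>m t. m < K \<and> min x c \<le> t \<and> t \<le> max x c \<longrightarrow>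
     ((deriv ^^ m) h has_real_derivative (deriv ^^ Suc m) h t) (at t)"
    using smooth by blast
  have d0: "(deriv ^^ 0) h = h" by simp
  obtain t where
    eq: "h x = (\<Sum>m<K. (deriv ^^ m) h c / fact m * (x - c) ^ m) + (deriv ^^ K) h t / fact K * (x - c) ^ K"
    using Taylor[OF K d0 prem _ _ _ _ False] by force
  have "\<bar>(deriv ^^ K) h t / fact K * (x - c) ^ K\<bar> = \<bar>(deriv ^^ K) h t\<bar> / fact K * \<bar>x - c\<bar> ^ K"
    by (simp add: abs_mult power_abs)
  also have "\<dots> \<le> (Q * fact K / R ^ K / (2 * pi)) / fact K * (R / 2) ^ K"
  proof (intro mult_mono divide_right_mono power_mono)
    have "\<bar>(deriv ^^ K) h t\<bar> = 2 * pi * \<bar>(deriv ^^ K) h t\<bar> / (2 * pi)" by simp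
    also have "\<dots> \<le> Q * fact K / R ^ K / (2 * pi)"
      by (rule divide_right_mono[OF bnd]) simp
    finally show "\<bar>(deriv ^^ K) h t\<bar> \<le> Q * fact K / R ^ K / (2 * pi)" .
  qed (use xc Q R in auto)
  also have "\<dots> = Q / (2 * pi) / 2 ^ K"
    using R by (simp add: power_divide)
  finally show ?thesis using eq by simp
qed
qed

lemma poly_as_sum:
  fixes q :: "complex poly"
  assumes "degree q < D"
  shows "poly q x = (\<Sum>l<D. coeff q l * x ^ l)"
proof -
  have "poly q x = (\<Sum>l\<le>degree q. coeff q l * x ^ l)" by (rule poly_altdef)
  also have "\<dots> = (\<Sum>l<D. coeff q l * x ^ l)"
    using assms by (intro sum.mono_neutral_left) (auto simp: coeff_eq_0)
  finally show ?thesis .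
qed

lemma polylog_bound:
  fixes a p :: real
  assumes a: "a \<ge> 0" and p: "p > 0"
  shows "\<exists>C>0. \<forall>\<epsilon>. 0 < \<epsilon> \<and> \<epsilon> \<le> 1 \<longrightarrow> (a + log 2 (1 / \<epsilon>)) ^ 3 \<le> C * \<epsilon> powr (- p)"
proof -
  define c where "c = p * ln 2"
  have c: "c > 0" using p by (simp add: c_def)
  define C where "C = 6 * exp (c * a) / c ^ 3"
  have C: "C > 0" using c by (simp add: C_def)
  show ?thesis
  proof (intro exI[of _ C] conjI C allI impI)
    fix \<epsilon> :: real assume e: "0 < \<epsilon> \<and> \<epsilon> \<le> 1"
    define y where "y = log 2 (1 / \<epsilon>)"
    have y: "y \<ge> 0" using e by (simp add: y_def)
    have "(c * (a + y)) ^ 3 / fact 3 \<le> exp (c * (a + y))"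
      by (rule pow_fact_le_exp) (use a y c in auto)
    moreover have "fact 3 = (6::real)" by (simp add: eval_nat_numeral)
    ultimately have "(c * (a + y)) ^ 3 \<le> 6 * exp (c * (a + y))" by simp
    moreover have "(c * (a + y)) ^ 3 = c ^ 3 * (a + y) ^ 3" by (simp add: power_mult_distrib)
    moreover have "exp (c * (a + y)) = exp (c * a) * exp (c * y)" by (simp add: distrib_left exp_add)
    ultimately have "c ^ 3 * (a + y) ^ 3 \<le> 6 * exp (c * a) * exp (c * y)" by simp
    then have "(a + y) ^ 3 \<le> C * exp (c * y)"
      using c by (simp add: C_def field_simps)
    moreover have "exp (c * y) = \<epsilon> powr (- p)"
      using e by (simp add: c_def y_def log_def powr_def ln_div)
    ultimately show "(a + log 2 (1 / \<epsilon>)) ^ 3 \<le> C * \<epsilon> powr (- p)" by (simp add: y_def)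
  qed
qed



theorem theorem2:
  fixes N :: nat and \<alpha> Q R :: real
    and \<Phi> :: "real \<times> real \<Rightarrow> real \<times> real \<Rightarrow> real"
    and \<xi>h :: "real \<times> real"
    and g :: "real \<times> real \<Rightarrow> real \<times> real"
  assumes N: "N > 0" "even N"
    and \<alpha>: "\<alpha> > 0"
    and hom: "\<And>x \<xi> t. x \<in> {0..1} \<times> {0..1} \<Longrightarrow> \<xi> \<noteq> 0 \<Longrightarrow> t > 0 \<Longrightarrow>
                 \<Phi> x (t *\<^sub>R \<xi>) = t * \<Phi> x \<xi>"
    and unit: "norm \<xi>h = 1"
    and grad: "\<And>x. x \<in> {0..1} \<times> {0..1} \<Longrightarrow>
                 (\<Phi> x has_derivative (\<lambda>h. g x \<bullet> h)) (at \<xi>h)"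
    and meas: "\<And>\<xi>. \<xi> \<noteq> 0 \<Longrightarrow>
                 (\<lambda>x. \<Phi> x \<xi> - g x \<bullet> \<xi>) \<in> borel_measurable (lebesgue_on ({0..1} \<times> {0..1}))"
    and QR: "Q > 0" "R > 0"
    and anal: "QR_analytic (\<lambda>x \<xi>. \<Phi> x \<xi> - g x \<bullet> \<xi>) ({0..1} \<times> {0..1}) Q R"
    and adm: "\<alpha> < min (R * sqrt (real N) / 2) (R / sqrt (sqrt 2 * Q))"
  shows "\<forall>p. p > 2 / log 2 (R * sqrt (real N) / \<alpha>) \<longrightarrow>
           (\<exists>C>0. \<forall>\<epsilon>. 0 < \<epsilon> \<and> \<epsilon> \<le> 1 \<longrightarrow>
              real (sep_rank (\<lambda>x \<xi>. cis (2 * pi * (\<Phi> x \<xi> - g x \<bullet> \<xi>)))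
                      ({0..1} \<times> {0..1}) (wedge N \<alpha> \<xi>h) \<epsilon>) \<le> C * \<epsilon> powr (- p))"
proof (intro allI impI)
  fix p assume pgt: "p > 2 / log 2 (R * sqrt (real N) / \<alpha>)"
  define D1 :: "(real \<times> real) set" where "D1 = {0..1} \<times> {0..1}"
  define Nr where "Nr = real N"
  have sN: "sqrt (real N) > 0" using N by simp
  have a2: "\<alpha> < R * sqrt (real N) / 2" using adm by simp
  have ratio: "R * sqrt (real N) / \<alpha> > 2" using a2 \<alpha> by (simp add: field_simps)
  have "log 2 (R * sqrt (real N) / \<alpha>) > log 2 2" using ratio by (intro log_less) auto
  then have lg: "log 2 (R * sqrt (real N) / \<alpha>) > 1" by simp
  have "2 / log 2 (R * sqrt (real N) / \<alpha>) > 0" using lg by simp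
  then have p: "p > 0" using pgt by linarith
  have angR: "\<alpha> / sqrt (real N) < R / 2" using a2 sN by (simp add: field_simps)
  define F where "F x \<xi> = \<Phi> x \<xi> - g x \<bullet> \<xi>" for x \<xi>
  define h where "h x t = F x (cos t, sin t)" for x t
  have A: "real_analytic_on2 (F x) (- {0}) \<and>
      (\<forall>k::nat. \<forall>\<theta>::real. 2 * pi * \<bar>(deriv ^^ k) (h x) \<theta>\<bar> \<le> Q * fact k / R ^ k)"
    if "x \<in> D1" for x
    using anal that unfolding QR_analytic_def D1_def F_def[abs_def] h_def[abs_def] by blast
  have smooth: "((deriv ^^ k) (h x) has_real_derivative (deriv ^^ Suc k) (h x) t) (at t)"
    if "x \<in> D1" for x k t
    using circle_smooth[OF conjunct1[OF A[OF that]]] by (simp add: h_def[abs_def])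
  have bnd: "2 * pi * \<bar>(deriv ^^ k) (h x) t\<bar> \<le> Q * fact k / R ^ k" if "x \<in> D1" for x k t
    using A[OF that] by blast
  obtain \<theta>0 where th0: "\<xi>h = (cos \<theta>0, sin \<theta>0)" "0 \<le> \<theta>0" "\<theta>0 < 2 * pi"
  proof -
    have "(fst \<xi>h)\<^sup>2 + (snd \<xi>h)\<^sup>2 = 1" using unit by (cases \<xi>h) (simp add: norm_Pair)
    then show ?thesis using sincos_total_2pi that by (metis prod.collapse)
  qed
  have polar: "\<exists>\<phi>. \<xi> = norm \<xi> *\<^sub>R (cos \<phi>, sin \<phi>) \<and> \<bar>\<phi> - \<theta>0\<bar> \<le> pi" if "\<xi> \<noteq> 0" for \<xi> :: "real \<times> real"
  proof -
    define u where "u = \<xi> /\<^sub>R norm \<xi>"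
    have nu: "norm u = 1" using that by (simp add: u_def)
    have "(fst u)\<^sup>2 + (snd u)\<^sup>2 = 1" using nu by (cases u) (simp add: norm_Pair)
    then obtain \<phi>1 where ph1: "0 \<le> \<phi>1" "\<phi>1 < 2 * pi" "fst u = cos \<phi>1" "snd u = sin \<phi>1"
      using sincos_total_2pi by metis
    have xi: "\<xi> = norm \<xi> *\<^sub>R u" using that by (simp add: u_def)
    have uc: "u = (cos \<phi>1, sin \<phi>1)" using ph1 by (simp add: prod_eq_iff)
    consider "\<bar>\<phi>1 - \<theta>0\<bar> \<le> pi" | "\<phi>1 - \<theta>0 > pi" | "\<phi>1 - \<theta>0 < - pi" by linarith
    then show ?thesis
    proof cases
      case 1 then show ?thesis using xi uc by blast
    next
      case 2
      have "u = (cos (\<phi>1 - 2 * pi), sin (\<phi>1 - 2 * pi))" using uc by (simp add: cos_diff sin_diff)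
      moreover have "\<bar>(\<phi>1 - 2 * pi) - \<theta>0\<bar> \<le> pi" using 2 ph1 th0 by linarith
      ultimately show ?thesis using xi by blast
    next
      case 3
      have "u = (cos (\<phi>1 + 2 * pi), sin (\<phi>1 + 2 * pi))" using uc by (simp add: cos_add sin_add)
      moreover have "\<bar>(\<phi>1 + 2 * pi) - \<theta>0\<bar> \<le> pi" using 3 ph1 th0 by linarith
      ultimately show ?thesis using xi by blast
    qed
  qed
  define phi where "phi \<xi> = (SOME \<phi>. \<xi> = norm \<xi> *\<^sub>R (cos \<phi>, sin \<phi>) \<and> \<bar>\<phi> - \<theta>0\<bar> \<le> pi)" for \<xi>
  have phi: "\<xi> = norm \<xi> *\<^sub>R (cos (phi \<xi>), sin (phi \<xi>)) \<and> \<bar>phi \<xi> - \<theta>0\<bar> \<le> pi" if "\<xi> \<noteq> 0" for \<xi>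
    unfolding phi_def using someI_ex[OF polar[OF that]] .
  have wedge_props: "\<xi> \<noteq> 0 \<and> norm \<xi> \<le> Nr \<and> \<bar>phi \<xi> - \<theta>0\<bar> \<le> R / 2" if "\<xi> \<in> wedge N \<alpha> \<xi>h" for \<xi>
  proof -
    have w: "\<xi> \<in> {- real N / 2 .. real N / 2 - 1} \<times> {- real N / 2 .. real N / 2 - 1}" "\<xi> \<noteq> 0"
      "vec_angle \<xi> \<xi>h \<le> \<alpha> / sqrt (real N)" using that by (auto simp: wedge_def)
    have "norm \<xi> \<le> norm (fst \<xi>) + norm (snd \<xi>)" using norm_Pair_le[of "fst \<xi>" "snd \<xi>"] by simp
    also have "\<dots> \<le> Nr" using w(1) by (cases \<xi>) (auto simp: Nr_def)
    finally have nx: "norm \<xi> \<le> Nr" .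
    have ph: "\<xi> = norm \<xi> *\<^sub>R (cos (phi \<xi>), sin (phi \<xi>))" "\<bar>phi \<xi> - \<theta>0\<bar> \<le> pi" using phi[OF w(2)] by auto
    have "\<xi> \<bullet> \<xi>h = norm \<xi> * cos (phi \<xi> - \<theta>0)"
      by (subst ph(1)) (simp add: th0 cos_diff inner_Pair algebra_simps)
    then have "vec_angle \<xi> \<xi>h = arccos (cos (phi \<xi> - \<theta>0))"
      using w(2) unit by (simp add: vec_angle_def)
    also have "\<dots> = \<bar>phi \<xi> - \<theta>0\<bar>" using ph(2) by (rule arccos_cos_eq_abs)
    finally show ?thesis using w angR nx by linarith
  qed
  have Fpolar: "F x \<xi> = norm \<xi> * h x (phi \<xi>)" if "x \<in> D1" "\<xi> \<noteq> 0" for x \<xi>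
  proof -
    have ne: "(cos (phi \<xi>), sin (phi \<xi>)) \<noteq> 0"
      by (simp add: prod_eq_iff) (metis sin_cos_squared_add zero_neq_one power2_eq_square mult_zero_left add_0)
    have "F x \<xi> = F x (norm \<xi> *\<^sub>R (cos (phi \<xi>), sin (phi \<xi>)))" using phi[OF that(2)] by simp
    also have "\<dots> = norm \<xi> * h x (phi \<xi>)"
      using hom[OF that(1)[unfolded D1_def] ne, of "norm \<xi>"] that(2)
      by (cases "g x") (simp add: F_def h_def inner_Pair algebra_simps)
    finally show ?thesis .
  qed
  define B where "B = 2 * Nr * Q"
  define C1 where "C1 = Nr * Q + B * exp (3 * B)"
  have B: "B > 0" using N QR by (simp add: B_def Nr_def)
  have C1: "C1 > 0" using N QR B unfolding C1_def Nr_def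
    by (intro add_pos_pos mult_pos_pos) auto
  define a where "a = \<bar>log 2 C1\<bar> + 3"
  obtain C where C: "C > 0" and Cb: "\<And>\<epsilon>. 0 < \<epsilon> \<Longrightarrow> \<epsilon> \<le> 1 \<Longrightarrow> (a + log 2 (1 / \<epsilon>)) ^ 3 \<le> C * \<epsilon> powr (- p)"
    using polylog_bound[of a p] p by (auto simp: a_def)
  show "\<exists>C>0. \<forall>\<epsilon>. 0 < \<epsilon> \<and> \<epsilon> \<le> 1 \<longrightarrow>
              real (sep_rank (\<lambda>x \<xi>. cis (2 * pi * (\<Phi> x \<xi> - g x \<bullet> \<xi>)))
                      ({0..1} \<times> {0..1}) (wedge N \<alpha> \<xi>h) \<epsilon>) \<le> C * \<epsilon> powr (- p)"
  proof (intro exI[of _ C] conjI C allI impI)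
    fix \<epsilon> :: real assume e: "0 < \<epsilon> \<and> \<epsilon> \<le> 1"
    define L where "L = nat \<lceil>log 2 (C1 / \<epsilon>)\<rceil> + 1"
    have L1: "L \<ge> 1" by (simp add: L_def)
    have L2: "C1 / \<epsilon> \<le> 2 ^ L"
    proof -
      have "C1 / \<epsilon> = 2 powr (log 2 (C1 / \<epsilon>))" using C1 e by simp
      also have "\<dots> \<le> 2 powr (real L)" unfolding L_def by (intro powr_mono) linarith+
      also have "\<dots> = 2 ^ L" by (simp add: powr_realpow)
      finally show ?thesis .
    qed
    have L3: "real L + 1 \<le> a + log 2 (1 / \<epsilon>)"
    proof -
      have "log 2 (C1 / \<epsilon>) = log 2 C1 + log 2 (1 / \<epsilon>)" using C1 e by (simp add: log_divide log_mult[symmetric])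
      moreover have "log 2 (1 / \<epsilon>) \<ge> 0" using e by simp
      ultimately show ?thesis unfolding L_def a_def by linarith
    qed
    define D where "D = L * L + 1"
    define M where "M = L + 1"
    have D0: "D > 0" by (simp add: D_def)
    define P where "P x = (\<Sum>k<L. monom (complex_of_real ((deriv ^^ k) (h x) \<theta>0 / fact k)) k)" for x
    have coeffP: "coeff (P x) i = (if i < L then complex_of_real ((deriv ^^ i) (h x) \<theta>0 / fact i) else 0)" for x i
      unfolding P_def coeff_sum coeff_monom by (simp add: sum.delta)
    have degP: "degree (P x) \<le> L" for x
      by (rule degree_le) (auto simp: coeffP)
    have degPj: "degree (P x ^ j) < D" if "j < M" for x j
    proof -
      have "degree (P x ^ j) \<le> degree (P x) * j" by (rule degree_power_le)
      also have "\<dots> \<le> L * L" using degP[of x] that by (intro mult_mono) (auto simp: M_def)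
      finally show ?thesis by (simp add: D_def)
    qed
    have polyP: "poly (P x) (complex_of_real \<tau>) = complex_of_real (\<Sum>k<L. (deriv ^^ k) (h x) \<theta>0 / fact k * \<tau> ^ k)" for x \<tau>
      by (simp add: P_def poly_sum poly_monom)
    define cf where "cf n x = coeff (P x ^ (n div D)) (n mod D)" for n x
    define df where "df n \<xi> = (\<i> * complex_of_real (2 * pi * norm \<xi>)) ^ (n div D) / fact (n div D)
        * (complex_of_real (phi \<xi> - \<theta>0)) ^ (n mod D)" for n \<xi>
    have approx: "cmod (cis (2 * pi * (\<Phi> x \<xi> - g x \<bullet> \<xi>)) - (\<Sum>n<M * D. cf n x * df n \<xi>)) \<le> \<epsilon>"
      if xD: "x \<in> D1" and xW: "\<xi> \<in> wedge N \<alpha> \<xi>h" for x \<xi>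
    proof -
      note wp = wedge_props[OF xW]
      define \<rho> where "\<rho> = norm \<xi>"
      define \<tau> where "\<tau> = phi \<xi> - \<theta>0"
      define pv where "pv = (\<Sum>k<L. (deriv ^^ k) (h x) \<theta>0 / fact k * \<tau> ^ k)"
      define hv where "hv = h x (phi \<xi>)"
      have \<rho>: "0 \<le> \<rho>" "\<rho> \<le> Nr" using wp by (auto simp: \<rho>_def)
      have tay: "\<bar>hv - pv\<bar> \<le> Q / (2 * pi) / 2 ^ L"
        unfolding hv_def pv_def \<tau>_def
      proof (rule taylor_approx[OF smooth[OF xD] bnd[OF xD] QR(2)])
        show "\<bar>phi \<xi> - \<theta>0\<bar> \<le> R / 2" using wp by blast
        show "0 < L" using L1 by simp
      qed
      have "2 * pi * \<bar>hv\<bar> \<le> Q" using bnd[OF xD, of 0 "phi \<xi>"] by (simp add: hv_def)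
      then have hvb: "\<bar>hv\<bar> \<le> Q / (2 * pi)" by (simp add: pos_le_divide_eq mult.commute)
      define w where "w = \<i> * complex_of_real (2 * pi * \<rho>)"
      define z where "z = \<i> * complex_of_real (2 * pi * \<rho> * pv)"
      have sumeq: "(\<Sum>n<M * D. cf n x * df n \<xi>) = (\<Sum>j\<le>L. z ^ j / fact j)"
      proof -
        have "(\<Sum>n<M * D. cf n x * df n \<xi>)
            = (\<Sum>j<M. \<Sum>l<D. coeff (P x ^ j) l * (w ^ j / fact j * complex_of_real \<tau> ^ l))"
          unfolding cf_def df_def w_def \<rho>_def \<tau>_def by (rule sum_div_mod[OF D0])
        also have "\<dots> = (\<Sum>j<M. w ^ j / fact j * poly (P x ^ j) (complex_of_real \<tau>))"
        proof (rule sum.cong[OF refl])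
          fix j assume "j \<in> {..<M}"
          then have "poly (P x ^ j) (complex_of_real \<tau>) = (\<Sum>l<D. coeff (P x ^ j) l * complex_of_real \<tau> ^ l)"
            using degPj by (intro poly_as_sum) auto
          then show "(\<Sum>l<D. coeff (P x ^ j) l * (w ^ j / fact j * complex_of_real \<tau> ^ l))
              = w ^ j / fact j * poly (P x ^ j) (complex_of_real \<tau>)"
          proof -
            have "(\<Sum>l<D. coeff (P x ^ j) l * (w ^ j / fact j * complex_of_real \<tau> ^ l))
                = w ^ j / fact j * (\<Sum>l<D. coeff (P x ^ j) l * complex_of_real \<tau> ^ l)"
              by (simp add: sum_distrib_left mult.left_commute)
            then show ?thesis using \<open>poly (P x ^ j) (complex_of_real \<tau>) = _\<close> by simp
          qed
        qed
        also have "\<dots> = (\<Sum>j\<le>L. z ^ j / fact j)"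
        proof -
          have Meq: "{..<M} = {..L}" unfolding M_def using lessThan_Suc_atMost[of L] by simp
          have pP: "poly (P x) (complex_of_real \<tau>) = complex_of_real pv"
            unfolding pv_def by (rule polyP)
          have zw: "z = w * complex_of_real pv"
            unfolding z_def w_def by (simp only: of_real_mult mult.assoc)
          have termeq: "w ^ j / fact j * poly (P x ^ j) (complex_of_real \<tau>) = z ^ j / fact j" for j
          proof -
            have "poly (P x ^ j) (complex_of_real \<tau>) = (complex_of_real pv) ^ j"
              by (simp only: poly_power pP)
            moreover have "(w * complex_of_real pv) ^ j = w ^ j * complex_of_real pv ^ j"
              by (rule power_mult_distrib)
            ultimately show ?thesis unfolding zw by (simp only: times_divide_eq_left)
          qed
          show ?thesis unfolding Meq by (rule sum.cong[OF refl]) (rule termeq)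
        qed
        finally show ?thesis .
      qed
      have "\<Phi> x \<xi> - g x \<bullet> \<xi> = \<rho> * hv"
        using Fpolar[OF xD, of \<xi>] wp unfolding F_def \<rho>_def hv_def by blast
      then have feq: "cis (2 * pi * (\<Phi> x \<xi> - g x \<bullet> \<xi>)) = cis (2 * pi * \<rho> * hv)"
        by (simp only: mult.assoc)
      have zeq: "exp z = cis (2 * pi * \<rho> * pv)" unfolding z_def by (rule cis_conv_exp[symmetric])
      have err1: "cmod (cis (2 * pi * \<rho> * hv) - exp z) \<le> Nr * Q / 2 ^ L"
      proof -
        have "cmod (cis (2 * pi * \<rho> * hv) - exp z) \<le> \<bar>2 * pi * \<rho> * hv - 2 * pi * \<rho> * pv\<bar>"
          unfolding zeq by (rule cis_diff_le)
        also have "\<dots> = \<bar>(2 * pi * \<rho>) * (hv - pv)\<bar>" by (simp only: right_diff_distrib)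
        also have "\<dots> = 2 * pi * \<rho> * \<bar>hv - pv\<bar>" using \<rho> by (simp add: abs_mult)
        also have "\<dots> \<le> 2 * pi * Nr * (Q / (2 * pi) / 2 ^ L)"
          using \<rho> tay by (intro mult_mono) auto
        also have "\<dots> = Nr * Q / 2 ^ L" by simp
        finally show ?thesis .
      qed
      have nz: "norm z \<le> B"
      proof -
        have "\<bar>pv\<bar> \<le> Q / (2 * pi) + Q / (2 * pi) / 2 ^ L" using tay hvb by linarith
        also have "\<dots> \<le> Q / (2 * pi) + Q / (2 * pi) / 1"
          using QR by (intro add_left_mono divide_left_mono) auto
        finally have "\<bar>pv\<bar> \<le> Q / pi" by simp
        have "norm z = 2 * pi * \<rho> * \<bar>pv\<bar>" using \<rho> by (simp add: z_def norm_mult abs_mult)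
        also have "\<dots> \<le> 2 * pi * Nr * (Q / pi)"
          using \<rho> \<open>\<bar>pv\<bar> \<le> Q / pi\<close> by (intro mult_mono) auto
        also have "\<dots> = B" by (simp add: B_def)
        finally show ?thesis .
      qed
      have err2: "cmod (exp z - (\<Sum>j\<le>L. z ^ j / fact j)) \<le> B * exp (3 * B) / 2 ^ L"
      proof -
        have "cmod (exp z - (\<Sum>j\<le>L. z ^ j / fact j)) \<le> exp (norm z) * norm z ^ Suc L / fact L"
          by (rule Taylor_exp_field)
        also have "\<dots> \<le> exp B * B ^ Suc L / fact L"
          using nz by (intro mult_mono divide_right_mono power_mono) auto
        also have "\<dots> = exp B * B * (B ^ L / fact L)" by simp
        also have "\<dots> \<le> exp B * B * (exp (2 * B) / 2 ^ L)"
        proof -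
          have "(2 * B) ^ L / fact L \<le> exp (2 * B)" using B by (intro pow_fact_le_exp) auto
          then have "2 ^ L * (B ^ L / fact L) \<le> exp (2 * B)" by (simp add: power_mult_distrib)
          then have "B ^ L / fact L \<le> exp (2 * B) / 2 ^ L" by (simp add: pos_le_divide_eq mult.commute)
          then show ?thesis using B by (intro mult_left_mono) auto
        qed
        also have "\<dots> = B * exp (3 * B) / 2 ^ L"
        proof -
          have "B + 2 * B = 3 * B" by linarith
          then have e3: "exp (3 * B) = exp B * exp (2 * B)" by (metis exp_add)
          show ?thesis unfolding e3 by (simp add: mult_ac)
        qed
        finally show ?thesis .
      qed
      have "cmod (cis (2 * pi * (\<Phi> x \<xi> - g x \<bullet> \<xi>)) - (\<Sum>n<M * D. cf n x * df n \<xi>))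
          = cmod ((cis (2 * pi * \<rho> * hv) - exp z) + (exp z - (\<Sum>j\<le>L. z ^ j / fact j)))"
        unfolding feq sumeq by simp
      also have "\<dots> \<le> cmod (cis (2 * pi * \<rho> * hv) - exp z) + cmod (exp z - (\<Sum>j\<le>L. z ^ j / fact j))"
        by (rule norm_triangle_ineq)
      also have "\<dots> \<le> C1 / 2 ^ L" using err1 err2 by (simp add: C1_def add_divide_distrib)
      also have "\<dots> \<le> \<epsilon>"
      proof -
        have "C1 \<le> 2 ^ L * \<epsilon>" using L2 e by (simp add: pos_divide_le_eq)
        then show ?thesis by (simp add: pos_divide_le_eq mult.commute)
      qed
      finally show ?thesis .
    qed
    have "sep_rank (\<lambda>x \<xi>. cis (2 * pi * (\<Phi> x \<xi> - g x \<bullet> \<xi>))) ({0..1} \<times> {0..1}) (wedge N \<alpha> \<xi>h) \<epsilon> \<le> M * D"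
      unfolding sep_rank_def
      by (rule Least_le, intro exI[of _ cf] exI[of _ df] ballI approx) (auto simp: D1_def)
    then have "real (sep_rank (\<lambda>x \<xi>. cis (2 * pi * (\<Phi> x \<xi> - g x \<bullet> \<xi>))) ({0..1} \<times> {0..1}) (wedge N \<alpha> \<xi>h) \<epsilon>)
        \<le> real (M * D)" by (rule of_nat_mono)
    also have "\<dots> = real M * real D" by (rule of_nat_mult)
    also have "\<dots> \<le> (real L + 1) ^ 3"
    proof -
      have rM: "real M = real L + 1" by (simp add: M_def)
      have rD: "real D = real L * real L + 1" by (simp add: D_def)
      have sq: "(real L + 1) * (real L + 1) = real L * real L + 2 * real L + 1" by algebra
      have "real L * real L + 1 \<le> (real L + 1) * (real L + 1)" unfolding sq by simp
      then have "(real L + 1) * (real L * real L + 1) \<le> (real L + 1) * ((real L + 1) * (real L + 1))"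
        by (intro mult_left_mono) auto
      then show ?thesis unfolding rM rD by (simp only: power3_eq_cube mult.assoc)
    qed
    also have "\<dots> \<le> (a + log 2 (1 / \<epsilon>)) ^ 3"
      using L3 by (intro power_mono) auto
    also have "\<dots> \<le> C * \<epsilon> powr (- p)" using Cb e by blast
    finally show "real (sep_rank (\<lambda>x \<xi>. cis (2 * pi * (\<Phi> x \<xi> - g x \<bullet> \<xi>))) ({0..1} \<times> {0..1}) (wedge N \<alpha> \<xi>h) \<epsilon>)
          \<le> C * \<epsilon> powr (- p)" .
  qed
qed
end
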